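(* Let $\rho$ be a state on $\mathcal H_{AB}$ and let $\mathcal F$ be a convex set of states on $\mathcal H_{AB}$. Then for every $\epsilon>0$, $\gamma^{\epsilon}_{\mathcal F}(\rho)\ge 2^{D^{\epsilon}_{\max}(\rho\|\mathcal F)}$.
   Context: $\log$ base 2. $B_\epsilon(\rho)=\{\tau\text{ a state on }\mathcal H_{AB}: d(\tau,\rho)\le\epsilon\}$ with $d$ the trace-norm induced distance. The smoothed $\gamma$-factor is $\gamma^{\epsilon}_{\mathcal F}(\rho)=\inf\{c_1+c_2:\ \sigma=c_1\sigma_1-c_2\sigma_2,\ c_1,c_2\ge0,\ \sigma_1,\sigma_2\in\mathcal F,\ \sigma\in B_\epsilon(\rho)\}$. The smoothed max-relative entropy with respect to $\mathcal F$ is $D^{\epsilon}_{\max}(\rho\|\mathcal F)=\min_{\tau\in B_\epsilon(\rho)}\inf_{\sigma\in\mathcal F}\inf\{\lambda\in\mathbb R:\tau\le2^{\lambda}\sigma\}$. *)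

theory Defs
  imports "Jordan_Normal_Form.Schur_Decomposition" "HOL-Library.Extended_Real"
begin

text \<open>Finite-dimensional quantum states on H_AB, modelled as n x n complex matrices
  (n = dim H_AB).\<close>

definition psd :: "nat \<Rightarrow> complex mat \<Rightarrow> bool" where
  "psd n A \<longleftrightarrow> A \<in> carrier_mat n n \<and>
     (\<forall>v \<in> carrier_vec n. Im ((A *\<^sub>v v) \<bullet>c v) = 0 \<and> Re ((A *\<^sub>v v) \<bullet>c v) \<ge> 0)"

definition loewner_le :: "nat \<Rightarrow> complex mat \<Rightarrow> complex mat \<Rightarrow> bool" where
  "loewner_le n A B \<longleftrightarrow> A \<in> carrier_mat n n \<and> B \<in> carrier_mat n n \<and> psd n (B - A)"

definition mtrace :: "complex mat \<Rightarrow> complex" where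
  "mtrace A = (\<Sum>i<dim_row A. A $$ (i, i))"

definition is_state :: "nat \<Rightarrow> complex mat \<Rightarrow> bool" where
  "is_state n \<rho> \<longleftrightarrow> psd n \<rho> \<and> mtrace \<rho> = 1"

text \<open>Trace norm ||X||_1 = tr sqrt(X^* X) = sum of singular values (with multiplicity):
  the eigenvalues of X^* X are the roots of its characteristic polynomial.\<close>
definition trace_norm :: "complex mat \<Rightarrow> real" where
  "trace_norm X = (let B = mat_adjoint X * X in
     (\<Sum>k \<in> {k. poly (char_poly B) k = 0}. real (order k (char_poly B)) * sqrt (Re k)))"

definition tdist :: "complex mat \<Rightarrow> complex mat \<Rightarrow> real" where
  "tdist \<tau> \<rho> = trace_norm (\<tau> - \<rho>)"

definition eps_ball :: "nat \<Rightarrow> real \<Rightarrow> complex mat \<Rightarrow> complex mat set" where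
  "eps_ball n \<epsilon> \<rho> = {\<tau>. is_state n \<tau> \<and> tdist \<tau> \<rho> \<le> \<epsilon>}"

definition convex_mat_set :: "complex mat set \<Rightarrow> bool" where
  "convex_mat_set F \<longleftrightarrow> (\<forall>s1\<in>F. \<forall>s2\<in>F. \<forall>t::real. 0 \<le> t \<and> t \<le> 1 \<longrightarrow>
      complex_of_real t \<cdot>\<^sub>m s1 + complex_of_real (1 - t) \<cdot>\<^sub>m s2 \<in> F)"

text \<open>Smoothed gamma-factor (infimum in the extended reals; +\<infinity> for an empty set).\<close>
definition gamma_eps :: "nat \<Rightarrow> real \<Rightarrow> complex mat set \<Rightarrow> complex mat \<Rightarrow> ereal" where
  "gamma_eps n \<epsilon> F \<rho> = Inf {ereal (c1 + c2) | c1 c2 s1 s2.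
      0 \<le> c1 \<and> 0 \<le> c2 \<and> s1 \<in> F \<and> s2 \<in> F \<and>
      complex_of_real c1 \<cdot>\<^sub>m s1 - complex_of_real c2 \<cdot>\<^sub>m s2 \<in> eps_ball n \<epsilon> \<rho>}"

definition Dmax_eps :: "nat \<Rightarrow> real \<Rightarrow> complex mat \<Rightarrow> complex mat set \<Rightarrow> ereal" where
  "Dmax_eps n \<epsilon> \<rho> F = Inf ((\<lambda>\<tau>. Inf ((\<lambda>\<sigma>. Inf {ereal l | l. loewner_le n \<tau> (complex_of_real (2 powr l) \<cdot>\<^sub>m \<sigma>)}) ` F))
      ` eps_ball n \<epsilon> \<rho>)"

definition pow2_ereal :: "ereal \<Rightarrow> ereal" where
  "pow2_ereal x = (case x of ereal r \<Rightarrow> ereal (2 powr r) | PInfty \<Rightarrow> PInfty | MInfty \<Rightarrow> 0)"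

end

theory Submission
  imports Defs
begin

lemma pow2_mono: "x \<le> y \<Longrightarrow> pow2_ereal x \<le> pow2_ereal y"
  by (cases x; cases y) (auto simp: pow2_ereal_def)

lemma smult_mat_vec: "A \<in> carrier_mat n n \<Longrightarrow> v \<in> carrier_vec n \<Longrightarrow>
  (k \<cdot>\<^sub>m A) *\<^sub>v v = k \<cdot>\<^sub>v (A *\<^sub>v v)"
  by (intro eq_vecI) (auto simp: scalar_prod_def sum_distrib_left ac_simps)

lemma psd_smult:
  assumes "psd n A" "c \<ge> 0"
  shows "psd n (complex_of_real c \<cdot>\<^sub>m A)"
proof -
  have A: "A \<in> carrier_mat n n" using assms unfolding psd_def by auto
  show ?thesis unfolding psd_def
  proof (intro conjI ballI)
    show "complex_of_real c \<cdot>\<^sub>m A \<in> carrier_mat n n" using A by simp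
  next
    fix v :: "complex vec" assume v: "v \<in> carrier_vec n"
    have e: "((complex_of_real c \<cdot>\<^sub>m A) *\<^sub>v v) \<bullet>c v = complex_of_real c * ((A *\<^sub>v v) \<bullet>c v)"
      using A v by (simp add: smult_mat_vec)
    have "Im ((A *\<^sub>v v) \<bullet>c v) = 0" "Re ((A *\<^sub>v v) \<bullet>c v) \<ge> 0" using assms(1) v unfolding psd_def by auto
    then show "Im (((complex_of_real c \<cdot>\<^sub>m A) *\<^sub>v v) \<bullet>c v) = 0"
      "Re (((complex_of_real c \<cdot>\<^sub>m A) *\<^sub>v v) \<bullet>c v) \<ge> 0"
      unfolding e using assms(2) by auto
  qed
qed

lemma mtrace_comb:
  assumes "s1 \<in> carrier_mat n n" "s2 \<in> carrier_mat n n"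
  shows "mtrace (a \<cdot>\<^sub>m s1 - b \<cdot>\<^sub>m s2) = a * mtrace s1 - b * mtrace s2"
  using assms unfolding mtrace_def
  by (simp add: sum_subtractf sum_distrib_left)

theorem lemma5:
  fixes n :: nat and \<rho> :: "complex mat" and F :: "complex mat set" and \<epsilon> :: real
  assumes "is_state n \<rho>"
    and "\<forall>\<sigma>\<in>F. is_state n \<sigma>"
    and "convex_mat_set F"
    and "\<epsilon> > 0"
  shows "gamma_eps n \<epsilon> F \<rho> \<ge> pow2_ereal (Dmax_eps n \<epsilon> \<rho> F)"
  unfolding gamma_eps_def
proof (rule Inf_greatest, clarify)
  fix c1 c2 :: real and s1 s2
  assume c1: "0 \<le> c1" and c2: "0 \<le> c2" and s1F: "s1 \<in> F" and s2F: "s2 \<in> F"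
    and sb: "complex_of_real c1 \<cdot>\<^sub>m s1 - complex_of_real c2 \<cdot>\<^sub>m s2 \<in> eps_ball n \<epsilon> \<rho>"
  define \<sigma> where "\<sigma> = complex_of_real c1 \<cdot>\<^sub>m s1 - complex_of_real c2 \<cdot>\<^sub>m s2"
  have st1: "is_state n s1" and st2: "is_state n s2" using assms(2) s1F s2F by auto
  have s1: "s1 \<in> carrier_mat n n" and s2: "s2 \<in> carrier_mat n n"
    using st1 st2 unfolding is_state_def psd_def by auto
  have "mtrace \<sigma> = 1" using sb unfolding \<sigma>_def eps_ball_def is_state_def by auto
  moreover have "mtrace \<sigma> = complex_of_real c1 - complex_of_real c2"
    unfolding \<sigma>_def using mtrace_comb[OF s1 s2] st1 st2 unfolding is_state_def by simp
  ultimately have "c1 - c2 = 1"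
    by (metis of_real_1 of_real_diff of_real_eq_iff)
  hence cpos: "c1 + c2 > 0" using c2 by linarith
  define c where "c = c1 + c2"
  define t where "t = c1 / c"
  define m where "m = complex_of_real t \<cdot>\<^sub>m s1 + complex_of_real (1 - t) \<cdot>\<^sub>m s2"
  have t01: "0 \<le> t" "t \<le> 1" using c1 c2 cpos unfolding t_def c_def by auto
  have mF: "m \<in> F" using assms(3) s1F s2F t01 unfolding convex_mat_set_def m_def by blast
  define l where "l = log 2 c"
  have pl: "2 powr l = c" unfolding l_def c_def using cpos by simp
  have "1 - t = c2 / c" unfolding t_def c_def using cpos by (simp add: field_simps)
  have nz: "complex_of_real c1 + complex_of_real c2 \<noteq> 0"
    using cpos by (metis less_irrefl of_real_add of_real_eq_0_iff)
  have k1: "complex_of_real c * complex_of_real t = complex_of_real c1"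
    unfolding t_def using cpos c_def nz by (simp flip: of_real_mult)
  have k2: "complex_of_real c * complex_of_real (1 - t) = complex_of_real c2"
    unfolding \<open>1 - t = c2 / c\<close> using cpos c_def nz by (simp flip: of_real_mult)
  have key: "\<And>a b::complex. complex_of_real c * (complex_of_real t * a + complex_of_real (1 - t) * b)
     - (complex_of_real c1 * a - complex_of_real c2 * b) = complex_of_real (2 * c2) * b"
  proof -
    fix a b :: complex
    have "complex_of_real c * (complex_of_real t * a + complex_of_real (1 - t) * b)
       = (complex_of_real c * complex_of_real t) * a + (complex_of_real c * complex_of_real (1 - t)) * b"
      by (simp add: algebra_simps)
    then show "complex_of_real c * (complex_of_real t * a + complex_of_real (1 - t) * b)
     - (complex_of_real c1 * a - complex_of_real c2 * b) = complex_of_real (2 * c2) * b"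
      unfolding k1 k2 by simp
  qed
  have eq: "complex_of_real (2 powr l) \<cdot>\<^sub>m m - \<sigma> = complex_of_real (2 * c2) \<cdot>\<^sub>m s2"
    unfolding pl m_def \<sigma>_def
    apply (rule eq_matI)
    using s1 s2 key by auto
  have "loewner_le n \<sigma> (complex_of_real (2 powr l) \<cdot>\<^sub>m m)"
    unfolding loewner_le_def eq
    using s1 s2 psd_smult[of n s2 "2 * c2"] st2 c2 unfolding is_state_def m_def \<sigma>_def
    by auto
  hence "Inf {ereal l | l. loewner_le n \<sigma> (complex_of_real (2 powr l) \<cdot>\<^sub>m m)} \<le> ereal l"
    by (auto intro: Inf_lower)
  hence "Inf ((\<lambda>\<sigma>'. Inf {ereal l | l. loewner_le n \<sigma> (complex_of_real (2 powr l) \<cdot>\<^sub>m \<sigma>')}) ` F) \<le> ereal l"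
    using mF by (meson INF_lower2)
  hence "Dmax_eps n \<epsilon> \<rho> F \<le> ereal l"
    unfolding Dmax_eps_def using sb \<sigma>_def by (meson INF_lower2)
  hence "pow2_ereal (Dmax_eps n \<epsilon> \<rho> F) \<le> pow2_ereal (ereal l)" by (rule pow2_mono)
  also have "\<dots> = ereal (c1 + c2)" using pl unfolding pow2_ereal_def c_def by simp
  finally show "pow2_ereal (Dmax_eps n \<epsilon> \<rho> F) \<le> ereal (c1 + c2)" .
qed

end
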